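(* Let $d\ge 2$. Let $\mathfrak{V}=\{V_0,\dots,V_{d-1}\}$ and $\mathfrak{W}=\{W_0,\dots,W_{d-1}\}$ be two bases of the same $d$-dimensional subspace $\mathcal{S}$ of $\mathcal{L}(\mathbb{C}^d)$. Assume that each basis consists of unitary operators and is orthogonal with respect to the Hilbert–Schmidt inner product: $$\operatorname{Tr}(V_i^\dagger V_j)=d\,\delta_{ij},\qquad \operatorname{Tr}(W_i^\dagger W_j)=d\,\delta_{ij}.$$ Suppose that for every pair $m,n\in\{0,\dots,d-1\}$ the pair $V_n,W_m$ saturates the maximal bound. Then $\mathfrak{V}$ and $\mathfrak{W}$ are mutually unbiased, i.e. $$|\operatorname{Tr}(V_n^\dagger W_m)|=\sqrt d\quad\text{for all } m,n.$$
   Context: For unitaries $V,W$ on $\mathbb{C}^d$ and an orthonormal basis $\{|\chi_i\rangle\}$ of $\mathbb{C}^d$, the entropic uncertainty bound for testing $V$ and $W$ with measurement $\{|\chi_i\rangle\langle\chi_i|\}$ is $-\log\max_{i,j}|\langle\chi_i|WV^\dagger|\chi_j\rangle|^2$. The pair $V,W$ saturates the maximal bound if there is some tester, i.e. some orthonormal basis $\{|\chi_i\rangle\}_{i=1}^d$ (depending on the pair), for which this bound equals $\log d$. Equivalently, the bases $\{|\chi_i\rangle\}$ and $\{WV^\dagger|\chi_j\rangle\}$ are mutually unbiased: $$|\langle\chi_i|WV^\dagger|\chi_j\rangle|=1/\sqrt d\quad\text{for all } i,j.$$ *)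

theory Defs
  imports "HOL-Analysis.Analysis"
begin

text \<open>Operators on C^d are represented as complex^'n^'n with d = CARD('n).\<close>

definition hadj :: "complex^'n^'n \<Rightarrow> complex^'n^'n" where
  "hadj A = (\<chi> i j. cnj (A $ j $ i))"

definition cinner :: "complex^'n \<Rightarrow> complex^'n \<Rightarrow> complex" where
  "cinner x y = (\<Sum>i\<in>UNIV. cnj (x $ i) * y $ i)"

definition unitary_mat :: "complex^'n^'n \<Rightarrow> bool" where
  "unitary_mat U \<longleftrightarrow> hadj U ** U = mat 1 \<and> U ** hadj U = mat 1"

definition cscale :: "complex \<Rightarrow> complex^'n^'n \<Rightarrow> complex^'n^'n" where
  "cscale c A = (\<chi> i j. c * A $ i $ j)"

definition cspan_ops :: "('k \<Rightarrow> complex^'n^'n) \<Rightarrow> (complex^'n^'n) set" where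
  "cspan_ops B = {A. \<exists>c. A = (\<Sum>k\<in>UNIV. cscale (c k) (B k))}"

definition onb :: "('n \<Rightarrow> complex^'n) \<Rightarrow> bool" where
  "onb chi \<longleftrightarrow> (\<forall>i j. cinner (chi i) (chi j) = (if i = j then 1 else 0))"

definition entropic_bound :: "complex^'n^'n \<Rightarrow> complex^'n^'n \<Rightarrow> ('n \<Rightarrow> complex^'n) \<Rightarrow> real" where
  "entropic_bound V W chi =
     - log 2 (Max {(cmod (cinner (chi i) ((W ** hadj V) *v chi j)))^2 | i j. True})"

definition saturates_max_bound :: "complex^'n^'n \<Rightarrow> complex^'n^'n \<Rightarrow> bool" where
  "saturates_max_bound V W \<longleftrightarrow>
     (\<exists>chi. onb chi \<and> entropic_bound V W chi = log 2 (real CARD('n)))"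

end

theory Submission imports Defs begin

definition hs :: "complex^'n^'n \<Rightarrow> complex^'n^'n \<Rightarrow> complex" where
  "hs A B = (\<Sum>a\<in>UNIV. \<Sum>b\<in>UNIV. cnj (A$a$b) * B$a$b)"

lemma trace_hadj: "trace (hadj A ** B) = hs A B"
  unfolding trace_def hs_def hadj_def matrix_matrix_mult_def
  by (simp, subst sum.swap, simp)

lemma hs_sum_right: "hs A (\<Sum>k\<in>UNIV. cscale (c k) (B k)) = (\<Sum>k\<in>UNIV. c k * hs A (B k))"
proof -
  have "hs A (\<Sum>k\<in>UNIV. cscale (c k) (B k)) = (\<Sum>a\<in>UNIV. \<Sum>b\<in>UNIV. \<Sum>k\<in>UNIV. c k * (cnj (A$a$b) * B k$a$b))"
    unfolding hs_def cscale_def by (simp add: sum_component sum_distrib_left mult.left_commute)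
  also have "\<dots> = (\<Sum>k\<in>UNIV. \<Sum>a\<in>UNIV. \<Sum>b\<in>UNIV. c k * (cnj (A$a$b) * B k$a$b))"
    by (subst sum.swap, rule sum.cong, simp, subst sum.swap, simp)
  also have "\<dots> = (\<Sum>k\<in>UNIV. c k * hs A (B k))"
    unfolding hs_def by (simp add: sum_distrib_left)
  finally show ?thesis .
qed

lemma hs_sum_left: "hs (\<Sum>k\<in>UNIV. cscale (c k) (B k)) A = (\<Sum>k\<in>UNIV. cnj (c k) * hs (B k) A)"
proof -
  have "hs (\<Sum>k\<in>UNIV. cscale (c k) (B k)) A = (\<Sum>a\<in>UNIV. \<Sum>b\<in>UNIV. \<Sum>k\<in>UNIV. cnj (c k) * (cnj (B k$a$b) * A$a$b))"
    unfolding hs_def cscale_def by (simp add: sum_component sum_distrib_left sum_distrib_right mult.assoc)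
  also have "\<dots> = (\<Sum>k\<in>UNIV. \<Sum>a\<in>UNIV. \<Sum>b\<in>UNIV. cnj (c k) * (cnj (B k$a$b) * A$a$b))"
    by (subst sum.swap, rule sum.cong, simp, subst sum.swap, simp)
  also have "\<dots> = (\<Sum>k\<in>UNIV. cnj (c k) * hs (B k) A)"
    unfolding hs_def by (simp add: sum_distrib_left)
  finally show ?thesis .
qed

lemma onb_complete:
  fixes chi :: "'n::finite \<Rightarrow> complex^'n"
  assumes "onb chi"
  shows "(\<Sum>i\<in>UNIV. cnj (chi i $ a) * chi i $ b) = (if a = b then 1 else 0)"
proof -
  define C :: "complex^'n^'n" where "C = (\<chi> i k. chi i $ k)"
  have "C ** hadj C = mat 1"
    using assms unfolding onb_def C_def hadj_def matrix_matrix_mult_def mat_def cinner_def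
    by (auto simp: vec_eq_iff mult.commute)
  hence "hadj C ** C = mat 1" using matrix_left_right_inverse by blast
  hence "(hadj C ** C) $ a $ b = mat 1 $ a $ b" by simp
  thus ?thesis unfolding C_def hadj_def matrix_matrix_mult_def mat_def by simp
qed

lemma trace_onb:
  fixes chi :: "'n::finite \<Rightarrow> complex^'n"
  assumes "onb chi"
  shows "trace U = (\<Sum>i\<in>UNIV. cinner (chi i) (U *v chi i))"
proof -
  have "(\<Sum>i\<in>UNIV. cinner (chi i) (U *v chi i))
     = (\<Sum>i\<in>UNIV. \<Sum>a\<in>UNIV. \<Sum>b\<in>UNIV. U$a$b * (cnj (chi i $ a) * chi i $ b))"
    unfolding cinner_def matrix_vector_mult_def
    by (simp add: sum_distrib_left mult.commute mult.left_commute)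
  also have "\<dots> = (\<Sum>a\<in>UNIV. \<Sum>b\<in>UNIV. U$a$b * (\<Sum>i\<in>UNIV. cnj (chi i $ a) * chi i $ b))"
    by (simp add: sum_distrib_left, subst sum.swap, rule sum.cong, simp, subst sum.swap, simp)
  also have "\<dots> = trace U"
    by (simp only: onb_complete[OF assms], simp add: trace_def if_distrib cong: if_cong)
  finally show ?thesis by simp
qed

lemma max_le:
  fixes V W :: "complex^'n::finite^'n" and chi :: "'n \<Rightarrow> complex^'n"
  assumes "onb chi" and d2: "CARD('n) \<ge> 2"
    and eb: "entropic_bound V W chi = log 2 (real CARD('n))"
  shows "cmod (cinner (chi i) ((W ** hadj V) *v (chi j :: complex^'n))) ^ 2 \<le> 1 / real CARD('n::finite)"
proof -
  let ?S = "{(cmod (cinner (chi i) ((W ** hadj V) *v chi j)))^2 | i j. True}"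
  define M where "M = Max ?S"
  have fin: "finite ?S"
  proof -
    have "?S = (\<lambda>(i,j). (cmod (cinner (chi i) ((W ** hadj V) *v chi j)))^2) ` UNIV" by auto
    thus ?thesis by simp
  qed
  have le: "cmod (cinner (chi i) ((W ** hadj V) *v chi j)) ^ 2 \<le> M"
    unfolding M_def by (rule Max_ge[OF fin], blast)
  have M0: "M \<ge> 0" using le by (meson order_trans zero_le_power2)
  have dpos: "real CARD('n) > 0" using d2 by simp
  have "M \<le> 1 / real CARD('n)"
  proof (cases "M = 0")
    case True thus ?thesis by simp
  next
    case False
    with M0 have Mp: "M > 0" by simp
    have "- log 2 M = log 2 (real CARD('n))" using eb unfolding entropic_bound_def M_def by simp
    hence "log 2 M = log 2 (1 / real CARD('n))" using dpos by (simp add: log_divide)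
    hence "log 2 M \<le> log 2 (1 / real CARD('n))" by simp
    thus ?thesis using Mp dpos log_le_cancel_iff[of 2 M "1 / real CARD('n)"] by simp
  qed
  thus ?thesis using le by linarith
qed

lemma trace_bound:
  fixes V W :: "complex^'n::finite^'n"
  assumes d2: "CARD('n) \<ge> 2" and sat: "saturates_max_bound V W"
  shows "cmod (trace (hadj V ** W)) \<le> sqrt (real CARD('n::finite))"
proof -
  obtain chi :: "'n \<Rightarrow> complex^'n" where onb: "onb chi" and eb: "entropic_bound V W chi = log 2 (real CARD('n))"
    using sat unfolding saturates_max_bound_def by blast
  have dpos: "real CARD('n) > 0" using d2 by simp
  have each: "cmod (cinner (chi i) ((W ** hadj V) *v chi i)) \<le> 1 / sqrt (real CARD('n))" for i
  proof -
    have "cmod (cinner (chi i) ((W ** hadj V) *v chi i)) = sqrt (cmod (cinner (chi i) ((W ** hadj V) *v chi i)) ^ 2)"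
      by simp
    also have "\<dots> \<le> sqrt (1 / real CARD('n))"
      using max_le[OF onb d2 eb] real_sqrt_le_mono by blast
    also have "\<dots> = 1 / sqrt (real CARD('n))" by (simp add: real_sqrt_divide)
    finally show ?thesis .
  qed
  have "trace (hadj V ** W) = trace (W ** hadj V)" by (rule trace_mul_sym)
  also have "\<dots> = (\<Sum>i\<in>UNIV. cinner (chi i) ((W ** hadj V) *v chi i))" by (rule trace_onb[OF onb])
  finally have "cmod (trace (hadj V ** W)) \<le> (\<Sum>i\<in>UNIV. cmod (cinner (chi i) ((W ** hadj V) *v chi i)))"
    by (simp add: norm_sum)
  also have "\<dots> \<le> (\<Sum>i\<in>(UNIV::'n set). 1 / sqrt (real CARD('n)))" by (rule sum_mono, rule each)
  also have "\<dots> = real CARD('n) / sqrt (real CARD('n))" by simp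
  also have "\<dots> = sqrt (real CARD('n))" using dpos by (simp add: real_div_sqrt)
  finally show ?thesis .
qed

lemma delta_span:
  fixes W :: "'k::finite \<Rightarrow> complex^'n::finite^'n"
  shows "W m = (\<Sum>k\<in>UNIV. cscale (if k = m then 1 else 0) (W k))"
proof -
  have "(\<Sum>k\<in>UNIV. cscale (if k = m then 1 else 0) (W k)) $ a $ b = W m $ a $ b" for a b
  proof -
    have "(\<Sum>k\<in>UNIV. cscale (if k = m then 1 else 0) (W k)) $ a $ b
        = (\<Sum>k\<in>UNIV. (if k = m then W k $ a $ b else 0))"
      unfolding cscale_def sum_component by (intro sum.cong refl) simp
    also have "\<dots> = W m $ a $ b" by simp
    finally show ?thesis .
  qed
  thus ?thesis by (simp add: vec_eq_iff)
qed

theorem proposition2: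
  fixes V W :: "'n::finite \<Rightarrow> complex^'n^'n"
  assumes d2: "CARD('n) \<ge> 2"
    and V_unitary: "\<And>i. unitary_mat (V i)"
    and W_unitary: "\<And>i. unitary_mat (W i)"
    and V_orth: "\<And>i j. trace (hadj (V i) ** V j) = (if i = j then of_nat CARD('n) else 0)"
    and W_orth: "\<And>i j. trace (hadj (W i) ** W j) = (if i = j then of_nat CARD('n) else 0)"
    and same_span: "cspan_ops V = cspan_ops W"
    and sat: "\<And>m n. saturates_max_bound (V n) (W m)"
  shows "\<forall>m n. cmod (trace (hadj (V n) ** W m)) = sqrt (real CARD('n))"
proof (intro allI)
  fix m n
  define d where "d = real CARD('n)"
  have dpos: "d > 0" using d2 unfolding d_def by simp
  have "W m \<in> cspan_ops W" unfolding cspan_ops_def mem_Collect_eq by (rule exI[of _ "\<lambda>k. if k = m then 1 else 0"], rule delta_span)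
  hence "W m \<in> cspan_ops V" using same_span by simp
  then obtain c where c: "W m = (\<Sum>k\<in>UNIV. cscale (c k) (V k))" unfolding cspan_ops_def by blast
  have hsV: "hs (V i) (V j) = (if i = j then of_real d else 0)" for i j
    using V_orth[of i j] unfolding trace_hadj d_def by simp
  have tr: "trace (hadj (V k) ** W m) = c k * of_real d" for k
  proof -
    have "trace (hadj (V k) ** W m) = (\<Sum>j\<in>UNIV. c j * hs (V k) (V j))"
      unfolding trace_hadj by (subst c, rule hs_sum_right)
    also have "\<dots> = c k * of_real d" by (simp add: hsV if_distrib cong: if_cong)
    finally show ?thesis .
  qed
  have "of_real d = hs (W m) (W m)" using W_orth[of m m] unfolding trace_hadj d_def by simp
  also have "\<dots> = (\<Sum>k\<in>UNIV. cnj (c k) * hs (V k) (W m))"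
    by (subst (1) c, rule hs_sum_left)
  also have "\<dots> = (\<Sum>k\<in>UNIV. of_real (cmod (c k) ^ 2 * d))"
    using tr unfolding trace_hadj
    by (intro sum.cong refl) (simp only: of_real_mult complex_norm_square, simp add: mult_ac)
  finally have "of_real d = (of_real (\<Sum>k\<in>UNIV. cmod (c k) ^ 2 * d) :: complex)" by simp
  hence "d = (\<Sum>k\<in>UNIV. cmod (c k) ^ 2 * d)" using of_real_eq_iff by blast
  hence sum1: "(\<Sum>k\<in>UNIV. cmod (c k) ^ 2) = 1" using dpos by (simp add: sum_distrib_right[symmetric])
  have bnd: "cmod (c k) ^ 2 \<le> 1 / d" for k
  proof -
    have "cmod (c k) * d \<le> sqrt d"
      using trace_bound[OF d2 sat[where m=m and n=k]] tr[of k] dpos unfolding d_def by (simp add: norm_mult)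
    hence "cmod (c k) \<le> sqrt d / d" using dpos by (simp add: field_simps)
    hence "cmod (c k) ^ 2 \<le> (sqrt d / d) ^ 2" by (simp add: power_mono)
    also have "\<dots> = 1 / d" using dpos by (simp add: power_divide power2_eq_square)
    finally show ?thesis .
  qed
  have eq: "cmod (c k) ^ 2 = 1 / d" for k
  proof -
    have "(\<Sum>k\<in>UNIV. 1 / d - cmod (c k) ^ 2) = 0"
      using sum1 dpos unfolding d_def by (simp add: sum_subtractf)
    hence "\<forall>k\<in>UNIV. 1 / d - cmod (c k) ^ 2 = 0"
      using sum_nonneg_eq_0_iff[of UNIV "\<lambda>k. 1 / d - cmod (c k) ^ 2"] bnd by simp
    thus ?thesis by simp
  qed
  have "cmod (c n) = sqrt (1 / d)" using eq[of n] by (metis norm_ge_zero real_sqrt_unique)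
  hence "cmod (trace (hadj (V n) ** W m)) = sqrt (1/d) * d" using tr[of n] dpos by (simp add: norm_mult)
  also have "\<dots> = sqrt d" using dpos by (simp add: real_sqrt_divide real_div_sqrt)
  finally show "cmod (trace (hadj (V n) ** W m)) = sqrt (real CARD('n))" unfolding d_def .
qed

end
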